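(* Let $(p_n)_n$, $(q_n)_n$ be real sequences with $0<p_n,q_n\le 1$, $p_nq_n\to 0$ and $\frac{p_nq_n^2n}{\log n}\to\infty$ as $n\to\infty$. Let $\rho_n=\frac{p_nq_n^2n}{1+\log n}$ and $r_n=\lceil \rho_n^{-1/3}p_n^{-1}\rceil$. Let $(F_n)_n$ and $(s_n)_n$ be real sequences with $F_n=O(p_nq_nn)$, $s_n=q_n(1+o(1))$, and $F_ns_n$ a nonnegative integer for every $n$, and let $B_n\sim\mathrm{Bin}(F_ns_n,(1-p_n)^{r_n})$. Then for every $\varepsilon>0$, \[ P\bigl(|B_n+F_n(1-s_n)-F_n(1-p_nq_n)^{r_n}|>\varepsilon p_n^2q_n^2nr_n\bigr)=o\!\left(\frac{p_n^2q_nr_n}{n^2}\right)\quad (n\to\infty). \]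
   Context: $\mathrm{Bin}(m,\theta)$ denotes the binomial distribution with $m$ trials and success probability $\theta$. Asymptotic notations $o$, $O$ refer to $n\to\infty$. *)

theory Defs
  imports "HOL-Probability.Probability" "HOL-Library.Landau_Symbols"
begin

definition rho_seq :: "(nat \<Rightarrow> real) \<Rightarrow> (nat \<Rightarrow> real) \<Rightarrow> nat \<Rightarrow> real" where
  "rho_seq p q n = p n * (q n)^2 * real n / (1 + ln (real n))"

definition r_seq :: "(nat \<Rightarrow> real) \<Rightarrow> (nat \<Rightarrow> real) \<Rightarrow> nat \<Rightarrow> nat" where
  "r_seq p q n = nat \<lceil>(rho_seq p q n) powr (-1/3) / p n\<rceil>"

end

theory Submission
  imports Defs
begin

lemma bern2:
  fixes x :: real assumes "0 \<le> x" "x \<le> 1"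
  shows "(1 - x)^r \<le> 1 - real r * x + real r * (real r - 1) / 2 * x^2"
proof (induction r)
  case 0 then show ?case by simp
next
  case (Suc r)
  have "(1-x)^Suc r = (1-x)^r * (1-x)" by simp
  also have "\<dots> \<le> (1 - real r * x + real r * (real r - 1) / 2 * x^2) * (1-x)"
    using Suc assms by (intro mult_right_mono) auto
  also have "\<dots> \<le> 1 - real (Suc r) * x + real (Suc r) * (real (Suc r) - 1) / 2 * x^2"
  proof -
    have h: "real r * (real r - 1) / 2 * x^3 \<ge> 0" using assms
      by (cases r) (auto simp: field_simps)
    have e: "(1 - real r * x + real r * (real r - 1) / 2 * x^2) * (1-x)
      = 1 - real (Suc r) * x + real (Suc r) * (real (Suc r) - 1) / 2 * x^2 - real r * (real r - 1) / 2 * x^3"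
      by (simp add: field_simps power2_eq_square power3_eq_cube)
    show ?thesis using h e by linarith
  qed
  finally show ?case .
qed

lemma bern1:
  fixes x :: real assumes "0 \<le> x" "x \<le> 1"
  shows "1 - real r * x \<le> (1 - x)^r"
  using Bernoulli_inequality[of "-x" r] assms by simp

lemma diff_bound:
  fixes a b :: real assumes "0 \<le> a" "a \<le> 1" "0 \<le> b" "b \<le> 1"
  shows "\<bar>(1 - (1 - a*b)^r) - b * (1 - (1 - a)^r)\<bar> \<le> real r * (real r - 1) / 2 * a^2 * b"
proof -
  define R where "R = real r * (real r - 1) / 2"
  have R0: "R \<ge> 0" unfolding R_def by (cases r) auto
  have ab: "0 \<le> a*b" "a*b \<le> 1" using assms by (auto simp: mult_le_one)
  have u1: "1 - real r * (a*b) \<le> (1 - a*b)^r" by (rule bern1[OF ab])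
  have u2: "(1 - a*b)^r \<le> 1 - real r * (a*b) + R * (a*b)^2" unfolding R_def by (rule bern2[OF ab])
  have v1: "1 - real r * a \<le> (1 - a)^r" by (rule bern1) (use assms in auto)
  have v2: "(1 - a)^r \<le> 1 - real r * a + R * a^2" unfolding R_def by (rule bern2) (use assms in auto)
  have bv1: "b * (1 - real r * a) \<le> b * (1 - a)^r" using v1 assms by (intro mult_left_mono) auto
  have bv2: "b * (1 - a)^r \<le> b * (1 - real r * a + R * a^2)" using v2 assms by (intro mult_left_mono) auto
  have "R * (a*b)^2 \<le> R * a^2 * b"
  proof -
    have "a^2*b*b \<le> a^2 * b * 1" using assms by (intro mult_left_mono) auto
    then show ?thesis using R0 by (simp add: power2_eq_square mult_left_mono mult.assoc mult.left_commute) 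
  qed
  then show ?thesis using u1 u2 bv1 bv2 R0 unfolding R_def[symmetric]
    by (simp add: abs_le_iff algebra_simps)
qed

lemma binom_tail:
  fixes m :: nat and th T a b :: real
  assumes th: "0 \<le> th" "th \<le> 1" and T: "T > 0"
    and D: "\<bar>a - b + real m * th\<bar> \<le> T / 2"
  shows "measure_pmf.prob (binomial_pmf m th) {k. \<bar>real k + a - b\<bar> > T}
         \<le> (if m = 0 then 0 else 2 * exp (- (T^2) / (2 * real m)))"
proof (cases "m = 0")
  case True
  then show ?thesis using th D T by (simp add: binomial_pmf_0 indicator_def)
next
  case False
  interpret binomial_distribution m th by unfold_locales (use th in auto)
  have sub: "{k. \<bar>real k + a - b\<bar> > T} \<subseteq> {k. \<bar>real k - real m * th\<bar> \<ge> T/2}"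
  proof
    fix k assume "k \<in> {k. \<bar>real k + a - b\<bar> > T}"
    then have "\<bar>real k + a - b\<bar> > T" by simp
    moreover have "\<bar>real k + a - b\<bar> \<le> \<bar>real k - real m * th\<bar> + \<bar>a - b + real m * th\<bar>"
      by linarith
    ultimately show "k \<in> {k. \<bar>real k - real m * th\<bar> \<ge> T/2}" using D by simp
  qed
  have "measure_pmf.prob (binomial_pmf m th) {k. \<bar>real k + a - b\<bar> > T}
      \<le> measure_pmf.prob (binomial_pmf m th) {k. \<bar>real k - real m * th\<bar> \<ge> T/2}"
    by (rule measure_pmf.finite_measure_mono[OF sub]) simp
  also have "\<dots> \<le> 2 * exp (-2 * (T/2)\<^sup>2 / real m)"
    by (rule prob_abs_ge) (use False T in auto)
  also have "-2 * (T/2)\<^sup>2 / real m = - (T^2) / (2 * real m)"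
    by (simp add: field_simps power2_eq_square)
  finally show ?thesis using False by simp
qed

lemma pointwise:
  fixes pn qn Fn sn \<epsilon> C \<delta> y :: real and n r m :: nat
  assumes n3: "n \<ge> 3" and p: "0 < pn" "pn \<le> 1" and q: "0 < qn" "qn \<le> 1"
    and eps: "\<epsilon> > 0" and C: "C > 0" and Fb: "\<bar>Fn\<bar> \<le> C * (pn * qn * real n)"
    and sb: "\<bar>sn - qn\<bar> \<le> \<delta> * qn" and d1: "\<delta> \<le> 1" and d2: "\<delta> \<le> \<epsilon> / (4*C)"
    and y: "y > 0" "y \<ge> 20 * C / \<epsilon>^2" "y \<ge> 2 * C / \<epsilon>"
    and rho: "pn * qn^2 * real n / (1 + ln (real n)) = y^3"
    and growth: "pn * qn^2 * real n \<ge> ln (real n)"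
    and r1: "real r \<ge> 1 / (y * pn)" and r2: "real r \<le> 1 / (y * pn) + 1"
    and m: "Fn * sn = real m"
  shows "measure_pmf.prob (binomial_pmf m ((1 - pn) ^ r))
            {k. \<bar>real k + Fn * (1 - sn) - Fn * (1 - pn * qn) ^ r\<bar>
                 > \<epsilon> * pn^2 * qn^2 * real n * real r}
         \<le> (2 / real n) * (pn^2 * qn * real r / (real n)^2)"
proof -
  have n0: "real n \<ge> 3" using n3 by simp
  have lnn: "ln (real n) \<ge> 1"
  proof -
    have "exp 1 \<le> (3::real)" using exp_le by linarith
    then have "ln (exp 1) \<le> ln (real n)" using n0 by (subst ln_le_cancel_iff) auto
    then show ?thesis by simp
  qed
  have yp: "y * pn > 0" using y p by simp
  have rpos: "real r > 0" using r1 yp by (meson divide_pos_pos less_le_trans zero_less_one)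
  have pr1: "pn * real r \<ge> 1 / y" using r1 p y by (simp add: field_simps)
  have pr2: "pn * (real r - 1) \<le> 1 / y" using r2 p y by (simp add: field_simps)
  define P2 where "P2 = pn^2 * qn^2 * real n * real r"
  have P2pos: "P2 > 0" unfolding P2_def using p q rpos n0 by simp
  define T where "T = \<epsilon> * P2"
  have Tpos: "T > 0" unfolding T_def using eps P2pos by simp
  define th where "th = (1 - pn) ^ r"
  have th: "0 \<le> th" "th \<le> 1" unfolding th_def using p by (auto intro: power_le_one)
  define Bq where "Bq = 1 - (1 - pn)^r"
  have Bq0: "0 \<le> Bq" unfolding Bq_def using th th_def by simp
  have Bq1: "Bq \<le> real r * pn" unfolding Bq_def using bern1[of pn r] p by simp
  define R where "R = real r * (real r - 1) / 2"
  have R0: "R \<ge> 0" unfolding R_def using rpos by (cases r) auto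
  have dq: "\<delta> * qn \<le> qn" using d1 q mult_right_mono[of \<delta> 1 qn] by simp
  have s0: "sn \<ge> 0" using sb dq by linarith
  have s2: "sn \<le> 2 * qn" using sb dq by linarith
  have Deq: "Fn * (1 - sn) - Fn * (1 - pn * qn) ^ r + real m * th
      = Fn * ((1 - (1 - pn*qn)^r) - qn * (1 - (1-pn)^r)) + Fn * (qn - sn) * Bq"
    unfolding th_def Bq_def m[symmetric] by (simp add: algebra_simps)
  have t1: "\<bar>Fn * ((1 - (1 - pn*qn)^r) - qn * (1 - (1-pn)^r))\<bar> \<le> T / 4"
  proof -
    have "\<bar>Fn * ((1 - (1 - pn*qn)^r) - qn * (1 - (1-pn)^r))\<bar>
        \<le> \<bar>Fn\<bar> * (R * pn^2 * qn)"
      unfolding abs_mult R_def using diff_bound[of pn qn r] p q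
      by (intro mult_left_mono) auto
    also have "\<dots> \<le> (C * (pn * qn * real n)) * (R * pn^2 * qn)"
      using Fb R0 p q by (intro mult_right_mono) auto
    also have "\<dots> = (C/2) * P2 * (pn * (real r - 1))"
      unfolding P2_def R_def by (simp add: field_simps power2_eq_square)
    also have "\<dots> \<le> (C/2) * P2 * (1/y)"
      using pr2 C P2pos by (intro mult_left_mono) auto
    also have "1/y \<le> \<epsilon> / (2*C)" using y eps C by (simp add: field_simps)
    then have "(C/2) * P2 * (1/y) \<le> (C/2) * P2 * (\<epsilon> / (2*C))"
      using C P2pos by (intro mult_left_mono) auto
    also have "\<dots> = T / 4" unfolding T_def using C by (simp add: field_simps)
    finally show ?thesis by simp
  qed
  have t2: "\<bar>Fn * (qn - sn) * Bq\<bar> \<le> T / 4"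
  proof -
    have "\<bar>Fn * (qn - sn) * Bq\<bar> = \<bar>Fn\<bar> * \<bar>sn - qn\<bar> * Bq" using Bq0 by (simp add: abs_mult abs_minus_commute)
    also have "\<dots> \<le> (C * (pn * qn * real n)) * (\<delta> * qn) * (real r * pn)"
      using Fb sb Bq0 Bq1 by (intro mult_mono) auto
    also have "\<dots> = C * \<delta> * P2" unfolding P2_def by (simp add: field_simps power2_eq_square)
    also have "\<dots> \<le> C * (\<epsilon> / (4*C)) * P2" using d2 C P2pos by (intro mult_right_mono mult_left_mono) auto
    also have "\<dots> = T / 4" unfolding T_def using C by (simp add: field_simps)
    finally show ?thesis .
  qed
  have D: "\<bar>Fn * (1 - sn) - Fn * (1 - pn * qn) ^ r + real m * th\<bar> \<le> T / 2"
    unfolding Deq using t1 t2 by linarith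
  have prob: "measure_pmf.prob (binomial_pmf m th) {k. \<bar>real k + Fn * (1 - sn) - Fn * (1 - pn * qn) ^ r\<bar> > T}
         \<le> (if m = 0 then 0 else 2 * exp (- (T^2) / (2 * real m)))"
    by (rule binom_tail[OF th Tpos D])
  have key: "(if m = 0 then 0 else 2 * exp (- (T^2) / (2 * real m))) \<le> 2 / real n ^ 5"
  proof (cases "m = 0")
    case True then show ?thesis by simp
  next
    case False
    define K where "K = 2 * C * (pn * qn^2 * real n)"
    have mK: "real m \<le> K"
    proof -
      have "real m = Fn * sn" using m by simp
      also have "\<dots> \<le> \<bar>Fn\<bar> * sn" using s0 by (simp add: mult_right_mono)
      also have "\<dots> \<le> (C * (pn * qn * real n)) * (2 * qn)" using Fb s2 s0 C p q
        by (intro mult_mono) auto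
      also have "\<dots> = K" unfolding K_def by (simp add: power2_eq_square)
      finally show ?thesis .
    qed
    have mpos: "real m > 0" using False by simp
    have e1: "T^2 / (2 * K) \<le> T^2 / (2 * real m)"
      using mK mpos Tpos by (intro divide_left_mono) auto
    have e2: "T^2 / (2*K) = \<epsilon>^2 / (4*C) * (pn * qn^2 * real n) * (pn * real r)^2"
      unfolding K_def T_def P2_def using C p q n0 by (simp add: field_simps power2_eq_square)
    have e3: "(pn * real r)^2 \<ge> (1/y)^2" using pr1 y by (intro power_mono) auto
    have pq2: "pn * qn^2 * real n = y^3 * (1 + ln (real n))" using rho lnn by (simp add: field_simps)
    have "\<epsilon>^2 / (4*C) * (pn * qn^2 * real n) * (pn * real r)^2
        \<ge> \<epsilon>^2 / (4*C) * (y^3 * (1 + ln (real n))) * (1/y)^2"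
      unfolding pq2 using e3 eps C y lnn by (intro mult_left_mono) auto
    also have "\<epsilon>^2 / (4*C) * (y^3 * (1 + ln (real n))) * (1/y)^2 = (\<epsilon>^2 / (4*C) * y) * (1 + ln (real n))"
      using y C by (simp add: field_simps power2_eq_square power3_eq_cube)
    also have "\<epsilon>^2 / (4*C) * y \<ge> 5"
    proof -
      have "\<epsilon>^2 / (4*C) * y \<ge> \<epsilon>^2 / (4*C) * (20 * C / \<epsilon>^2)"
        using y eps C by (intro mult_left_mono) auto
      also have "\<epsilon>^2 / (4*C) * (20 * C / \<epsilon>^2) = 5" using eps C by (simp add: field_simps)
      finally show ?thesis .
    qed
    then have "(\<epsilon>^2 / (4*C) * y) * (1 + ln (real n)) \<ge> 5 * (1 + ln (real n))"
      using lnn by (intro mult_right_mono) auto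
    finally have big0: "5 * (1 + ln (real n)) \<le> T^2 / (2*K)" using e2 by simp
    have big: "T^2 / (2 * real m) \<ge> 5 * ln (real n)" using big0 e1 by (simp add: ring_distribs)
    have "exp (- (T^2) / (2 * real m)) \<le> exp (- (5 * ln (real n)))" using big by simp
    also have "exp (- (5 * ln (real n))) = 1 / real n ^ 5"
    proof -
      have "exp (5 * ln (real n)) = exp (ln (real n)) ^ 5"
        using exp_of_nat_mult[of 5 "ln (real n)"] by simp
      also have "\<dots> = real n ^ 5" using n0 by simp
      finally show ?thesis by (simp add: exp_minus field_simps)
    qed
    finally show ?thesis using False by simp
  qed
  have low: "pn^2 * qn * real r \<ge> 1 / (real n)^2"
  proof -
    have a: "pn * qn^2 * real n \<ge> 1" using growth lnn by linarith
    have b: "pn * qn \<ge> 1 / real n"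
    proof -
      have "pn * qn \<ge> pn * qn^2" using p q by (simp add: power2_eq_square mult_left_le_one_le)
      then have "pn * qn * real n \<ge> pn * qn^2 * real n" using n0 by (intro mult_right_mono) auto
      then have "pn * qn * real n \<ge> 1" using a by linarith
      then show ?thesis using n0 by (simp add: field_simps)
    qed
    have r1': "real r \<ge> 1" using rpos by simp
    have c: "pn * real r \<ge> 1 / real n"
    proof -
      have "pn * qn^2 \<le> pn" using p q by (simp add: power_le_one mult_left_le)
      moreover have "pn \<le> pn * real r" using p r1' by simp
      ultimately have "pn * qn^2 * real n \<le> pn * real r * real n" using n0 by (intro mult_right_mono) auto
      then have "pn * real r * real n \<ge> 1" using a by linarith
      then show ?thesis using n0 by (simp add: field_simps)
    qed
    have "(1 / real n) * (1 / real n) \<le> (pn * qn) * (pn * real r)"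
      using b c n0 p q by (intro mult_mono) auto
    then show ?thesis by (simp add: power2_eq_square field_simps)
  qed
  have fin: "2 / real n ^ 5 \<le> (2 / real n) * (pn^2 * qn * real r / (real n)^2)"
  proof -
    have "(2 / real n) * (1 / (real n)^2 / (real n)^2) \<le> (2 / real n) * (pn^2 * qn * real r / (real n)^2)"
      using low n0 by (intro mult_left_mono divide_right_mono) auto
    moreover have "(2 / real n) * (1 / (real n)^2 / (real n)^2) = 2 / real n ^ 5"
      using n0 by (simp add: field_simps numeral_eq_Suc)
    ultimately show ?thesis by simp
  qed
  show ?thesis using prob key fin unfolding T_def P2_def th_def by (simp add: mult.assoc)
qed


lemma cube_root:
  fixes x :: real assumes "x > 0"
  shows "(x powr (1/3))^3 = x"
proof -
  have "(x powr (1/3))^3 = (x powr (1/3)) powr (real 3)"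
    using assms by (subst powr_realpow) auto
  also have "\<dots> = x" using assms by (simp add: powr_powr)
  finally show ?thesis .
qed

theorem lemma8:
  fixes p q F s :: "nat \<Rightarrow> real"
  assumes p_range: "\<And>n. 0 < p n \<and> p n \<le> 1"
    and q_range: "\<And>n. 0 < q n \<and> q n \<le> 1"
    and pq_lim: "(\<lambda>n. p n * q n) \<longlonglongrightarrow> 0"
    and growth: "filterlim (\<lambda>n. p n * (q n)^2 * real n / ln (real n)) at_top sequentially"
    and F_bound: "F \<in> O(\<lambda>n. p n * q n * real n)"
    and s_asymp: "(\<lambda>n. s n - q n) \<in> o(\<lambda>n. q n)"
    and Fs_nat: "\<And>n. F n * s n \<in> \<nat>"
  shows "\<forall>\<epsilon>>0. (\<lambda>n. measure_pmf.prob
            (binomial_pmf (nat \<lfloor>F n * s n\<rfloor>) ((1 - p n) ^ r_seq p q n))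
            {k. \<bar>real k + F n * (1 - s n) - F n * (1 - p n * q n) ^ r_seq p q n\<bar>
                 > \<epsilon> * (p n)^2 * (q n)^2 * real n * real (r_seq p q n)})
         \<in> o(\<lambda>n. (p n)^2 * q n * real (r_seq p q n) / (real n)^2)"
proof (intro allI impI)
  fix \<epsilon> :: real assume eps: "\<epsilon> > 0"
  define f where "f = (\<lambda>n. measure_pmf.prob
            (binomial_pmf (nat \<lfloor>F n * s n\<rfloor>) ((1 - p n) ^ r_seq p q n))
            {k. \<bar>real k + F n * (1 - s n) - F n * (1 - p n * q n) ^ r_seq p q n\<bar>
                 > \<epsilon> * (p n)^2 * (q n)^2 * real n * real (r_seq p q n)})"
  define g where "g = (\<lambda>n. (p n)^2 * q n * real (r_seq p q n) / (real n)^2)"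
  obtain C where C: "C > 0" and evF: "eventually (\<lambda>n. norm (F n) \<le> C * norm (p n * q n * real n)) sequentially"
    using landau_o.bigE[OF F_bound] by blast
  define \<delta> where "\<delta> = min 1 (\<epsilon> / (4*C))"
  have d0: "\<delta> > 0" unfolding \<delta>_def using eps C by simp
  have evs: "eventually (\<lambda>n. norm (s n - q n) \<le> \<delta> * norm (q n)) sequentially"
    using landau_o.smallD[OF s_asymp d0] .
  define M where "M = max (20 * C / \<epsilon>^2) (2 * C / \<epsilon>)"
  have M0: "M > 0" unfolding M_def using C eps by (simp add: less_max_iff_disj)
  have evg: "eventually (\<lambda>n. max (2 * M^3) 1 \<le> p n * (q n)^2 * real n / ln (real n)) sequentially"
    using growth unfolding filterlim_at_top by blast
  have ev3: "eventually (\<lambda>n. n \<ge> 3) sequentially" by (rule eventually_ge_at_top)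
  have evmain: "eventually (\<lambda>n. f n \<le> (2 / real n) * g n \<and> 0 \<le> g n) sequentially"
    using evF evs evg ev3
  proof eventually_elim
    case (elim n)
    have n0: "real n \<ge> 3" using elim(4) by simp
    have lnn: "ln (real n) \<ge> 1"
    proof -
      have "exp 1 \<le> (3::real)" using exp_le by linarith
      then have "ln (exp 1) \<le> ln (real n)" using n0 by (subst ln_le_cancel_iff) auto
      then show ?thesis by simp
    qed
    have p: "0 < p n" "p n \<le> 1" and q: "0 < q n" "q n \<le> 1" using p_range q_range by auto
    define Q where "Q = p n * (q n)^2 * real n"
    have Q0: "Q > 0" unfolding Q_def using p q n0 by simp
    have ratio: "max (2 * M^3) 1 \<le> Q / ln (real n)" using elim(3) unfolding Q_def .
    have grow: "Q \<ge> ln (real n)" using ratio lnn by (simp add: field_simps)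
    have QM: "Q \<ge> 2 * M^3 * ln (real n)" using ratio lnn by (simp add: field_simps)
    define \<rho> where "\<rho> = rho_seq p q n"
    have rho_eq: "\<rho> = Q / (1 + ln (real n))" unfolding \<rho>_def rho_seq_def Q_def by simp
    have rho0: "\<rho> > 0" unfolding rho_eq using Q0 lnn by simp
    have rhoM: "\<rho> \<ge> M^3"
    proof -
      have "M^3 * (1 + ln (real n)) \<le> 2 * M^3 * ln (real n)" using lnn M0 by (simp add: field_simps)
      then have "M^3 * (1 + ln (real n)) \<le> Q" using QM by linarith
      then show ?thesis unfolding rho_eq using lnn by (simp add: field_simps)
    qed
    define y where "y = \<rho> powr (1/3)"
    have y0: "y > 0" unfolding y_def using rho0 by simp
    have y3: "y^3 = \<rho>" unfolding y_def using cube_root[OF rho0] .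
    have yM: "y \<ge> M"
    proof -
      have "(M^3) powr (1/3) \<le> \<rho> powr (1/3)" using rhoM M0 by (intro powr_mono2) auto
      moreover have "(M^3) powr (1/3) = M"
      proof -
        have e: "M powr (real 3) = M^3" using M0 by (rule powr_realpow)
        have "(M^3) powr (1/3) = (M powr (real 3)) powr (1/3)" by (simp only: e)
        also have "\<dots> = M" unfolding powr_powr using M0 by simp
        finally show ?thesis .
      qed
      ultimately show ?thesis unfolding y_def by simp
    qed
    define r where "r = r_seq p q n"
    have rdef: "r = nat \<lceil>1 / (y * p n)\<rceil>"
    proof -
      have "\<rho> powr (-1/3) = 1 / y" unfolding y_def using rho0
        by (simp add: powr_minus_divide[symmetric])
      then show ?thesis unfolding r_def r_seq_def \<rho>_def[symmetric] by simp
    qed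
    have z0: "1 / (y * p n) > 0" using y0 p by simp
    have rr: "real r = of_int \<lceil>1 / (y * p n)\<rceil>" unfolding rdef using z0 by simp
    have r1: "real r \<ge> 1 / (y * p n)" unfolding rr by (rule le_of_int_ceiling)
    have r2: "real r \<le> 1 / (y * p n) + 1" unfolding rr by (rule of_int_ceiling_le_add_one)
    obtain m where m: "F n * s n = real m" using Fs_nat[of n] by (auto elim: Nats_cases)
    have mm: "nat \<lfloor>F n * s n\<rfloor> = m" using m by simp
    have "measure_pmf.prob (binomial_pmf m ((1 - p n) ^ r))
            {k. \<bar>real k + F n * (1 - s n) - F n * (1 - p n * q n) ^ r\<bar>
                 > \<epsilon> * (p n)^2 * (q n)^2 * real n * real r}
         \<le> (2 / real n) * ((p n)^2 * q n * real r / (real n)^2)"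
    proof (rule pointwise[where C = C and \<delta> = \<delta> and y = y])
      show "3 \<le> n" using elim(4) .
      show "0 < p n" "p n \<le> 1" "0 < q n" "q n \<le> 1" "0 < \<epsilon>" "0 < C" "0 < y" using p q eps C y0 by auto
      show "\<bar>F n\<bar> \<le> C * (p n * q n * real n)" using elim(1) p q by simp
      show "\<bar>s n - q n\<bar> \<le> \<delta> * q n" using elim(2) q by simp
      show "\<delta> \<le> 1" "\<delta> \<le> \<epsilon> / (4 * C)" unfolding \<delta>_def by auto
      show "20 * C / \<epsilon>^2 \<le> y" "2 * C / \<epsilon> \<le> y" using yM unfolding M_def by auto
      show "p n * (q n)^2 * real n / (1 + ln (real n)) = y^3" using y3 rho_eq Q_def by simp
      show "ln (real n) \<le> p n * (q n)^2 * real n" using grow Q_def by simp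
      show "1 / (y * p n) \<le> real r" by (rule r1)
      show "real r \<le> 1 / (y * p n) + 1" by (rule r2)
      show "F n * s n = real m" by (rule m)
    qed
    then have "f n \<le> (2 / real n) * g n" unfolding f_def g_def r_def mm by simp
    moreover have "0 \<le> g n" unfolding g_def using p q by simp
    ultimately show ?case by simp
  qed
  show "f \<in> o(g)"
  proof (rule landau_o.smallI)
    fix c :: real assume c: "c > 0"
    have "(\<lambda>n. 2 / real n) \<longlonglongrightarrow> 0" by (rule lim_const_over_n)
    then have ev2: "eventually (\<lambda>n. 2 / real n < c) sequentially" using c by (rule order_tendstoD)
    show "eventually (\<lambda>n. norm (f n) \<le> c * norm (g n)) sequentially"
      using evmain ev2
    proof eventually_elim
      case (elim n)
      have f0: "f n \<ge> 0" unfolding f_def by simp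
      have "f n \<le> (2 / real n) * g n" using elim by simp
      also have "\<dots> \<le> c * g n" using elim by (intro mult_right_mono) auto
      finally show ?case using f0 elim by simp
    qed
  qed
qed

end
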